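(* Let $G=(V,E)$ be a finite simple connected graph, $t\ge 0$ an integer, $r\ge 0$ an integer, and $\Phi\subseteq\Phi^{(t)}_{\mathrm{all}}$ a set of failure patterns. Then consensus in $G$ can be solved by an oblivious algorithm running in $r$ rounds under the $t$-resilient model with failure patterns in $\Phi$ (i.e. for every input assignment and every failure pattern in $\Phi$) if and only if every connected component of the information flow graph $\mathsf{IF}(G,r,\Phi)$ has a dominating node in $V$.
   Context: Model. $G=(V,E)$ is a finite simple connected undirected graph whose nodes carry distinct identifiers; $N(v)$ is the neighbourhood of $v$. Computation proceeds in synchronous rounds; in each round every node sends a message to each neighbour, receives its neighbours' messages, and computes. Nodes know $G$ and $t$. Failure patterns. A failure pattern is a set $\varphi=\{(v,F_v,f_v): v\in F\}$ with $F\subseteq V$, $|F|\le t$, and for each $v\in F$ an integer $f_v\ge1$ and a nonempty $F_v\subseteq N(v)$: $v$ acts normally in rounds $1,\dots,f_v-1$, in round $f_v$ its messages reach exactly $N(v)\setminus F_v$, and afterwards it sends nothing. Nodes in $F$ are faulty, the others correct. $\Phi^{(t)}_{\mathrm{all}}$ denotes the set of all failure patterns with at most $t$ faulty nodes. Causal paths. A causal path w.r.t. $\varphi$ from $v$ to $v'$ is a sequence $u_1=v,\dots,u_q=v'$ with $u_{i+1}\in N(u_i)$, such that for each $i<q$, $u_i$ has not crashed during rounds $1,\dots,i-1$, and if $(u_i,F_{u_i},i)\in\varphi$ then $u_{i+1}\notin F_{u_i}$; its length is $q-1$. Views. Each node $u$ has input $x_u$; in flooding every node sends $(u,x_u)$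 in round 1 and forwards all known pairs in later rounds. $\mathrm{view}(v,r,\varphi)$ is the set of pairs $(u,x_u)$ known to $v$ after $r$ rounds under $\varphi$; $(u,x_u)\in\mathrm{view}(v,r,\varphi)$ iff $u=v$ or some causal path w.r.t. $\varphi$ from $u$ to $v$ has length at most $r$. Views are identified through the set of nodes $u$ whose pair they contain (this set depends only on $G,\varphi,r$), so the graph below does not depend on inputs. Oblivious algorithms and consensus. An oblivious algorithm running in $r$ rounds floods for $r$ rounds, then each correct node $v$ outputs a value depending only on $v$ and $\mathrm{view}(v,r,\varphi)$. Consensus: inputs come from a set $I$ with $|I|\ge2$; every correct node outputs a value in $I$, all correct nodes output the same value, and every output equals some node's input. Information flow graph. $\mathsf{IF}(G,r,\Phi)$ is the undirected graph whose vertices are all pairs $(v,\mathrm{view}(v,r,\varphi))$ with $\varphi\in\Phi$ and $v$ correct in $\varphi$ (two such pairs are the same vertex if the node and the view coincide), with an edge between $(v_1,w_1)$ and $(v_2,w_2)$ whenever there exists $\varphi\in\Phi$ with $w_1=\mathrm{view}(v_1,r,\varphi)$ and $w_2=\mathrm{view}(v_2,r,\varphi)$. Domination. A node $v\in V$ dominates a connected component $C$ of $\mathsf{IF}(G,r,\Phi)$ if for every $\varphi\in\Phi$ and every $u\in V$ with $(u,\mathrm{view}(u,r,\varphi))\in C$ we have $(v,x_v)\in\mathrm{view}(u,r,\varphi)$ ($v$ itself need not be correct). *)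

theory Defs
  imports Main
begin

definition simple_connected_graph :: "'v set \<Rightarrow> ('v \<times> 'v) set \<Rightarrow> bool" where
  "simple_connected_graph V E \<longleftrightarrow>
     finite V \<and> E \<subseteq> V \<times> V \<and> sym E \<and> irrefl E \<and>
     (\<forall>u\<in>V. \<forall>v\<in>V. (u, v) \<in> E\<^sup>*)"

definition nbhd :: "('v \<times> 'v) set \<Rightarrow> 'v \<Rightarrow> 'v set" where
  "nbhd E v = {u. (v, u) \<in> E}"

text \<open>A failure pattern assigns to each faulty node v the pair (F_v, f_v);
  correct nodes are mapped to None.\<close>
type_synonym 'v fpattern = "'v \<Rightarrow> ('v set \<times> nat) option"

definition faulty :: "'v fpattern \<Rightarrow> 'v set" where
  "faulty \<phi> = dom \<phi>"

definition correct :: "'v set \<Rightarrow> 'v fpattern \<Rightarrow> 'v \<Rightarrow> bool" where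
  "correct V \<phi> v \<longleftrightarrow> v \<in> V \<and> \<phi> v = None"

definition valid_fpattern :: "'v set \<Rightarrow> ('v \<times> 'v) set \<Rightarrow> nat \<Rightarrow> 'v fpattern \<Rightarrow> bool" where
  "valid_fpattern V E t \<phi> \<longleftrightarrow>
     faulty \<phi> \<subseteq> V \<and> card (faulty \<phi>) \<le> t \<and>
     (\<forall>v Fv fv. \<phi> v = Some (Fv, fv) \<longrightarrow> 1 \<le> fv \<and> Fv \<noteq> {} \<and> Fv \<subseteq> nbhd E v)"

definition Phi_all :: "'v set \<Rightarrow> ('v \<times> 'v) set \<Rightarrow> nat \<Rightarrow> 'v fpattern set" where
  "Phi_all V E t = {\<phi>. valid_fpattern V E t \<phi>}"

text \<open>A causal path is a nonempty list us = [u_1,...,u_q] (0-indexed here: us!i is u_(i+1)).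
  Node us!i sends in round i+1; it must not have crashed in rounds 1..i (i.e. not f \<le> i),
  and if it crashes exactly in round i+1 then us!(i+1) is not in F.\<close>
definition causal_path :: "('v \<times> 'v) set \<Rightarrow> 'v fpattern \<Rightarrow> 'v list \<Rightarrow> bool" where
  "causal_path E \<phi> us \<longleftrightarrow> us \<noteq> [] \<and>
     (\<forall>i. Suc i < length us \<longrightarrow>
        (us ! i, us ! Suc i) \<in> E \<and>
        (case \<phi> (us ! i) of
           None \<Rightarrow> True
         | Some (Fv, fv) \<Rightarrow> \<not> fv \<le> i \<and> (fv = Suc i \<longrightarrow> us ! Suc i \<notin> Fv)))"

text \<open>The view of v after r rounds, identified with the set of nodes whose input it contains.\<close>
definition view :: "('v \<times> 'v) set \<Rightarrow> nat \<Rightarrow> 'v fpattern \<Rightarrow> 'v \<Rightarrow> 'v set" where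
  "view E r \<phi> v = {u. u = v \<or>
     (\<exists>us. causal_path E \<phi> us \<and> hd us = u \<and> last us = v \<and> length us - 1 \<le> r)}"

definition view_pairs :: "('v \<times> 'v) set \<Rightarrow> nat \<Rightarrow> 'v fpattern \<Rightarrow> ('v \<Rightarrow> 'i) \<Rightarrow> 'v \<Rightarrow> ('v \<times> 'i) set" where
  "view_pairs E r \<phi> x v = {(u, x u) | u. u \<in> view E r \<phi> v}"

text \<open>An oblivious algorithm is a decision map dec v (view with inputs).\<close>
definition oblivious_consensus ::
  "'v set \<Rightarrow> ('v \<times> 'v) set \<Rightarrow> nat \<Rightarrow> 'v fpattern set \<Rightarrow> 'i set
     \<Rightarrow> ('v \<Rightarrow> ('v \<times> 'i) set \<Rightarrow> 'i) \<Rightarrow> bool" where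
  "oblivious_consensus V E r \<Phi> I dec \<longleftrightarrow>
     (\<forall>x. (\<forall>u\<in>V. x u \<in> I) \<longrightarrow> (\<forall>\<phi>\<in>\<Phi>.
        (\<forall>v. correct V \<phi> v \<longrightarrow> dec v (view_pairs E r \<phi> x v) \<in> I) \<and>
        (\<forall>v w. correct V \<phi> v \<longrightarrow> correct V \<phi> w \<longrightarrow>
            dec v (view_pairs E r \<phi> x v) = dec w (view_pairs E r \<phi> x w)) \<and>
        (\<forall>v. correct V \<phi> v \<longrightarrow> (\<exists>u\<in>V. dec v (view_pairs E r \<phi> x v) = x u))))"

definition consensus_solvable_oblivious ::
  "'v set \<Rightarrow> ('v \<times> 'v) set \<Rightarrow> nat \<Rightarrow> 'v fpattern set \<Rightarrow> 'i set \<Rightarrow> bool" where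
  "consensus_solvable_oblivious V E r \<Phi> I \<longleftrightarrow> (\<exists>dec. oblivious_consensus V E r \<Phi> I dec)"

definition IF_vertices :: "'v set \<Rightarrow> ('v \<times> 'v) set \<Rightarrow> nat \<Rightarrow> 'v fpattern set \<Rightarrow> ('v \<times> 'v set) set" where
  "IF_vertices V E r \<Phi> = {(v, view E r \<phi> v) | v \<phi>. \<phi> \<in> \<Phi> \<and> correct V \<phi> v}"

definition IF_edges :: "'v set \<Rightarrow> ('v \<times> 'v) set \<Rightarrow> nat \<Rightarrow> 'v fpattern set
     \<Rightarrow> (('v \<times> 'v set) \<times> ('v \<times> 'v set)) set" where
  "IF_edges V E r \<Phi> = {((v1, view E r \<phi> v1), (v2, view E r \<phi> v2)) | v1 v2 \<phi>.
       \<phi> \<in> \<Phi> \<and> correct V \<phi> v1 \<and> correct V \<phi> v2}"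

definition IF_components :: "'v set \<Rightarrow> ('v \<times> 'v) set \<Rightarrow> nat \<Rightarrow> 'v fpattern set
     \<Rightarrow> ('v \<times> 'v set) set set" where
  "IF_components V E r \<Phi> =
     {{b \<in> IF_vertices V E r \<Phi>. (a, b) \<in> (IF_edges V E r \<Phi>)\<^sup>*} | a. a \<in> IF_vertices V E r \<Phi>}"

definition dominates :: "('v \<times> 'v) set \<Rightarrow> nat \<Rightarrow> 'v fpattern set \<Rightarrow> 'v \<Rightarrow> ('v \<times> 'v set) set \<Rightarrow> bool" where
  "dominates E r \<Phi> v C \<longleftrightarrow>
     (\<forall>\<phi>\<in>\<Phi>. \<forall>u. (u, view E r \<phi> u) \<in> C \<longrightarrow> v \<in> view E r \<phi> u)"

end

theory Submission
  imports Defs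
begin

definition vp :: "('v \<Rightarrow> 'i) \<Rightarrow> 'v set \<Rightarrow> ('v \<times> 'i) set" where
  "vp x S = {(w, x w) | w. w \<in> S}"

lemma view_pairs_vp: "view_pairs E r \<phi> x u = vp x (view E r \<phi> u)"
  by (simp add: view_pairs_def vp_def)

lemma fst_vp: "fst ` vp x S = S"
  by (force simp: vp_def image_iff)

lemma IF_edges_sym: "(p, q) \<in> IF_edges V E r \<Phi> \<Longrightarrow> (q, p) \<in> IF_edges V E r \<Phi>"
  unfolding IF_edges_def by blast

lemma edge_eq:
  assumes oc: "oblivious_consensus V E r \<Phi> I dec" and xI: "\<forall>u\<in>V. x u \<in> I"
    and e: "(p, q) \<in> IF_edges V E r \<Phi>"
  shows "dec (fst p) (vp x (snd p)) = dec (fst q) (vp x (snd q))"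
proof -
  from e obtain v1 v2 \<phi> where p: "p = (v1, view E r \<phi> v1)" and q: "q = (v2, view E r \<phi> v2)"
    and ph: "\<phi> \<in> \<Phi>" and c1: "correct V \<phi> v1" and c2: "correct V \<phi> v2"
    unfolding IF_edges_def by blast
  have "dec v1 (view_pairs E r \<phi> x v1) = dec v2 (view_pairs E r \<phi> x v2)"
    using oc xI ph c1 c2 unfolding oblivious_consensus_def by blast
  then show ?thesis using p q by (simp add: view_pairs_vp)
qed
lemma rt_eq:
  assumes oc: "oblivious_consensus V E r \<Phi> I dec" and xI: "\<forall>u\<in>V. x u \<in> I"
    and "(p, q) \<in> (IF_edges V E r \<Phi>)\<^sup>*"
  shows "dec (fst p) (vp x (snd p)) = dec (fst q) (vp x (snd q))"
  using assms(3)
proof (induction rule: rtrancl_induct)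
  case base then show ?case by simp
next
  case (step y z)
  then show ?case using edge_eq[OF oc xI step(2)] by simp
qed

lemma vertex_out:
  assumes oc: "oblivious_consensus V E r \<Phi> I dec" and xI: "\<forall>u\<in>V. x u \<in> I"
    and p: "p \<in> IF_vertices V E r \<Phi>"
  shows "\<exists>u\<in>V. dec (fst p) (vp x (snd p)) = x u"
proof -
  from p obtain v \<phi> where pp: "p = (v, view E r \<phi> v)" and ph: "\<phi> \<in> \<Phi>" and c: "correct V \<phi> v"
    unfolding IF_vertices_def by blast
  have "\<exists>u\<in>V. dec v (view_pairs E r \<phi> x v) = x u"
    using oc xI ph c unfolding oblivious_consensus_def by blast
  then show ?thesis using pp by (simp add: view_pairs_vp)
qed
lemma vp_cong: "(\<And>w. w \<in> S \<Longrightarrow> x w = y w) \<Longrightarrow> vp x S = vp y S"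
  unfolding vp_def by auto

lemma forward:
  fixes V :: "'v set" and E :: "('v \<times> 'v) set" and a b :: 'i
    and dec :: "'v \<Rightarrow> ('v \<times> 'i) set \<Rightarrow> 'i"
  assumes fin: "finite V" and ab: "a \<in> I" "b \<in> I" "a \<noteq> b"
    and oc: "oblivious_consensus V E r \<Phi> I dec"
  shows "\<forall>C\<in>IF_components V E r \<Phi>. \<exists>v\<in>V. dominates E r \<Phi> v C"
proof (rule ccontr)
  assume "\<not> ?thesis"
  then obtain C where C: "C \<in> IF_components V E r \<Phi>" and nd: "\<forall>v\<in>V. \<not> dominates E r \<Phi> v C"
    by blast
  from C obtain a0 where a0: "a0 \<in> IF_vertices V E r \<Phi>"
    and Cdef: "C = {q \<in> IF_vertices V E r \<Phi>. (a0, q) \<in> (IF_edges V E r \<Phi>)\<^sup>*}"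
    unfolding IF_components_def by blast
  have a0C: "a0 \<in> C" using a0 Cdef by simp
  define xA :: "'v set \<Rightarrow> 'v \<Rightarrow> 'i" where "xA A = (\<lambda>w. if w \<in> A then b else a)" for A
  have xI: "\<forall>u\<in>V. xA A u \<in> I" for A using ab by (simp add: xA_def)
  have const: "dec (fst q) (vp x (snd q)) = dec (fst a0) (vp x (snd a0))"
    if "q \<in> C" "\<forall>u\<in>V. x u \<in> I" for q x
    using rt_eq[OF oc that(2), of a0 q] that(1) Cdef by simp
  have key: "finite A \<Longrightarrow> A \<subseteq> V \<Longrightarrow> \<forall>p\<in>C. dec (fst p) (vp (xA A) (snd p)) = a" for A
  proof (induction A rule: finite_induct)
    case empty
    show ?case
    proof
      fix p assume "p \<in> C"
      then have "p \<in> IF_vertices V E r \<Phi>" using Cdef by simp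
      from vertex_out[OF oc xI this, of "{}"] show "dec (fst p) (vp (xA {}) (snd p)) = a"
        by (auto simp: xA_def)
    qed
  next
    case (insert v A)
    then have IH: "\<forall>p\<in>C. dec (fst p) (vp (xA A) (snd p)) = a" and vV: "v \<in> V" by auto
    from nd vV obtain \<phi> u where "\<phi> \<in> \<Phi>" and uC: "(u, view E r \<phi> u) \<in> C"
      and nv: "v \<notin> view E r \<phi> u"
      unfolding dominates_def by blast
    have "vp (xA (insert v A)) (view E r \<phi> u) = vp (xA A) (view E r \<phi> u)"
      by (rule vp_cong) (use nv in \<open>auto simp: xA_def\<close>)
    then have p0: "dec u (vp (xA (insert v A)) (view E r \<phi> u)) = a"
      using IH uC by fastforce
    show ?case
    proof
      fix p assume "p \<in> C"
      have "dec (fst p) (vp (xA (insert v A)) (snd p))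
          = dec (fst a0) (vp (xA (insert v A)) (snd a0))" using const[OF \<open>p \<in> C\<close> xI] .
      also have "\<dots> = dec u (vp (xA (insert v A)) (view E r \<phi> u))"
        using const[OF uC xI] by simp
      finally show "dec (fst p) (vp (xA (insert v A)) (snd p)) = a" using p0 by simp
    qed
  qed
  have "dec (fst a0) (vp (xA V) (snd a0)) = a" using key[OF fin] a0C by simp
  moreover obtain u where "u \<in> V" "dec (fst a0) (vp (xA V) (snd a0)) = xA V u"
    using vertex_out[OF oc xI a0] by blast
  ultimately show False using ab by (simp add: xA_def)
qed

lemma backward:
  assumes dom: "\<forall>C\<in>IF_components V E r \<Phi>. \<exists>v\<in>V. dominates E r \<Phi> v C"
  shows "\<exists>dec. oblivious_consensus V E r \<Phi> I dec"
proof -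
  define comp where "comp p = {q \<in> IF_vertices V E r \<Phi>. (p, q) \<in> (IF_edges V E r \<Phi>)\<^sup>*}" for p
  define dom_of where "dom_of p = (SOME d. d \<in> V \<and> dominates E r \<Phi> d (comp p))" for p
  define dec where "dec v W = (SOME y. (dom_of (v, fst ` W), y) \<in> W)" for v and W :: "('a \<times> 'b) set"
  have compeq: "comp p = comp q" if "(p, q) \<in> IF_edges V E r \<Phi>" for p q
  proof -
    have "(q, p) \<in> IF_edges V E r \<Phi>" using IF_edges_sym[OF that] .
    then show ?thesis unfolding comp_def
      using that by (auto intro: converse_rtrancl_into_rtrancl)
  qed
  have main: "dec v (view_pairs E r \<phi> x v) = x (dom_of (v, view E r \<phi> v))
      \<and> dom_of (v, view E r \<phi> v) \<in> V"
    if "\<phi> \<in> \<Phi>" "correct V \<phi> v" for \<phi> v x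
  proof -
    let ?p = "(v, view E r \<phi> v)"
    have pV: "?p \<in> IF_vertices V E r \<Phi>" using that unfolding IF_vertices_def by blast
    then have "comp ?p \<in> IF_components V E r \<Phi>" unfolding IF_components_def comp_def by blast
    then have "\<exists>d. d \<in> V \<and> dominates E r \<Phi> d (comp ?p)" using dom by blast
    then have d: "dom_of ?p \<in> V \<and> dominates E r \<Phi> (dom_of ?p) (comp ?p)"
      unfolding dom_of_def by (rule someI_ex)
    have "?p \<in> comp ?p" using pV unfolding comp_def by simp
    then have dv: "dom_of ?p \<in> view E r \<phi> v" using d that(1) unfolding dominates_def by blast
    have W: "view_pairs E r \<phi> x v = vp x (view E r \<phi> v)" by (rule view_pairs_vp)
    have "(SOME y. (dom_of ?p, y) \<in> vp x (view E r \<phi> v)) = x (dom_of ?p)"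
      by (rule some_equality) (use dv in \<open>auto simp: vp_def\<close>)
    then show ?thesis using d unfolding dec_def W fst_vp by simp
  qed
  have "oblivious_consensus V E r \<Phi> I dec"
    unfolding oblivious_consensus_def
  proof (intro allI impI ballI conjI)
    fix x \<phi> v assume xI: "\<forall>u\<in>V. x u \<in> I" and "\<phi> \<in> \<Phi>"
    { assume "correct V \<phi> v"
      then show "dec v (view_pairs E r \<phi> x v) \<in> I" using main[OF \<open>\<phi> \<in> \<Phi>\<close>] xI by auto }
    { assume "correct V \<phi> v"
      then show "\<exists>u\<in>V. dec v (view_pairs E r \<phi> x v) = x u" using main[OF \<open>\<phi> \<in> \<Phi>\<close>] by auto }
  next
    fix x \<phi> v w assume "\<phi> \<in> \<Phi>" "correct V \<phi> v" "correct V \<phi> w"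
    then have "((v, view E r \<phi> v), (w, view E r \<phi> w)) \<in> IF_edges V E r \<Phi>"
      unfolding IF_edges_def by blast
    then have "comp (v, view E r \<phi> v) = comp (w, view E r \<phi> w)" by (rule compeq)
    then have "dom_of (v, view E r \<phi> v) = dom_of (w, view E r \<phi> w)" unfolding dom_of_def by simp
    then show "dec v (view_pairs E r \<phi> x v) = dec w (view_pairs E r \<phi> x w)"
      using main \<open>\<phi> \<in> \<Phi>\<close> \<open>correct V \<phi> v\<close> \<open>correct V \<phi> w\<close> by metis
  qed
  then show ?thesis by blast
qed

theorem theorem3:
  fixes V :: "'v set" and E :: "('v \<times> 'v) set" and t r :: nat
    and \<Phi> :: "'v fpattern set" and I :: "'i set"
  assumes "simple_connected_graph V E"
    and "\<Phi> \<subseteq> Phi_all V E t"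
    and "\<exists>a\<in>I. \<exists>b\<in>I. a \<noteq> b"
  shows "consensus_solvable_oblivious V E r \<Phi> I \<longleftrightarrow>
         (\<forall>C\<in>IF_components V E r \<Phi>. \<exists>v\<in>V. dominates E r \<Phi> v C)"
proof
  assume "consensus_solvable_oblivious V E r \<Phi> I"
  then obtain dec where oc: "oblivious_consensus V E r \<Phi> I dec"
    unfolding consensus_solvable_oblivious_def by blast
  have fin: "finite V" using assms(1) unfolding simple_connected_graph_def by blast
  from assms(3) obtain a b where "a \<in> I" "b \<in> I" "a \<noteq> b" by blast
  from forward[OF fin this oc] show "\<forall>C\<in>IF_components V E r \<Phi>. \<exists>v\<in>V. dominates E r \<Phi> v C" .
next
  assume "\<forall>C\<in>IF_components V E r \<Phi>. \<exists>v\<in>V. dominates E r \<Phi> v C"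
  then show "consensus_solvable_oblivious V E r \<Phi> I"
    unfolding consensus_solvable_oblivious_def by (rule backward)
qed

end
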